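(* The limit $\lim_{n\to\infty}\deg(s:S_n\to S_n)^{1/n}$ exists and satisfies \[1.12462\leq\lim_{n\to\infty}\deg(s:S_n\to S_n)^{1/n}\leq 4.\]
   Context: For finite sets $X,Y$ and $f:X\to Y$, $\deg(f)=\frac{1}{|X|}\sum_{y\in Y}|f^{-1}(y)|^2$. $S_n$ is the set of permutations of $\{1,\dots,n\}$, viewed as words. West's stack-sorting map $s$ is defined recursively on words with distinct positive integer entries: $s$ sends the empty word to itself, and if $\pi$ has largest entry $m$ and $\pi=LmR$ (with $L,R$ words), then $s(\pi)=s(L)\,s(R)\,m$. It restricts to a map $s:S_n\to S_n$. *)

theory Defs
  imports Complex_Main
begin

definition map_deg :: "('a \<Rightarrow> 'b) \<Rightarrow> 'a set \<Rightarrow> 'b set \<Rightarrow> real" where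
  "map_deg f X Y = (\<Sum>y\<in>Y. real (card {x\<in>X. f x = y}) ^ 2) / real (card X)"

function stack_sort :: "nat list \<Rightarrow> nat list" where
  "stack_sort w =
     (if w = [] then []
      else (let m = Max (set w);
                L = takeWhile (\<lambda>x. x \<noteq> m) w;
                R = tl (dropWhile (\<lambda>x. x \<noteq> m) w)
            in stack_sort L @ stack_sort R @ [m]))"
  by pat_completeness auto
termination
proof (relation "measure length", goal_cases)
  case 1 then show ?case by auto
next
  case (2 w m L)
  have "m \<in> set w" using 2 by simp
  then have "dropWhile (\<lambda>x. x \<noteq> m) w \<noteq> []" by (simp add: dropWhile_eq_Nil_conv)
  moreover have "length w = length L + length (dropWhile (\<lambda>x. x \<noteq> m) w)"
    using 2 by (simp add: length_append[symmetric] del: length_append)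
  ultimately show ?case by simp
next
  case (3 w m L R)
  have "m \<in> set w" using 3 by simp
  then have "dropWhile (\<lambda>x. x \<noteq> m) w \<noteq> []" by (simp add: dropWhile_eq_Nil_conv)
  moreover have "length (dropWhile (\<lambda>x. x \<noteq> m) w) \<le> length w" by (rule length_dropWhile_le)
  ultimately have "length (dropWhile (\<lambda>x. x \<noteq> m) w) - 1 < length w"
    by (cases "dropWhile (\<lambda>x. x \<noteq> m) w") auto
  then show ?case using 3 by simp
qed

definition perms :: "nat \<Rightarrow> nat list set" where
  "perms n = {w. distinct w \<and> set w = {1..n}}"

end

theory Submission
  imports Defs "HOL-Combinatorics.Multiset_Permutations" "HOL-Real_Asymp.Real_Asymp"
begin


declare stack_sort.simps[simp del]

lemma ss_Nil[simp]: "stack_sort [] = []"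
  by (subst stack_sort.simps) simp

lemma ss_decomp:
  assumes "w \<noteq> []"
  defines "m \<equiv> Max (set w)"
  defines "L \<equiv> takeWhile (\<lambda>x. x \<noteq> m) w"
  defines "R \<equiv> tl (dropWhile (\<lambda>x. x \<noteq> m) w)"
  shows "w = L @ m # R" and "stack_sort w = stack_sort L @ stack_sort R @ [m]"
proof -
  have mw: "m \<in> set w" using assms(1) unfolding m_def by simp
  have "dropWhile (\<lambda>x. x \<noteq> m) w \<noteq> []" using mw by (simp add: dropWhile_eq_Nil_conv)
  moreover have "hd (dropWhile (\<lambda>x. x \<noteq> m) w) = m"
    using hd_dropWhile[OF calculation] by simp
  ultimately have "dropWhile (\<lambda>x. x \<noteq> m) w = m # R" unfolding R_def
    by (metis list.collapse)
  then show "w = L @ m # R" unfolding L_def by (metis takeWhile_dropWhile_id)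
  show "stack_sort w = stack_sort L @ stack_sort R @ [m]"
    using assms(1) unfolding L_def R_def m_def by (subst stack_sort.simps) (simp add: Let_def)
qed

lemma ss_split:
  assumes "\<forall>x\<in>set L. x < m" "\<forall>x\<in>set R. x < m"
  shows "stack_sort (L @ m # R) = stack_sort L @ stack_sort R @ [m]"
proof -
  have M: "Max (set (L @ m # R)) = m"
    by (rule Max_eqI) (use assms in auto)
  have T: "takeWhile (\<lambda>x. x \<noteq> m) (L @ m # R) = L"
    using assms(1) by (induct L) auto
  have D: "dropWhile (\<lambda>x. x \<noteq> m) (L @ m # R) = m # R"
    using assms(1) by (induct L) auto
  show ?thesis
    unfolding stack_sort.simps[of "L @ m # R"] Let_def M T D by simp
qed

lemma ss_set_length: "set (stack_sort w) = set w \<and> length (stack_sort w) = length w"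
proof (induction w rule: stack_sort.induct)
  case (1 w)
  show ?case
  proof (cases "w = []")
    case True then show ?thesis by (subst stack_sort.simps) simp
  next
    case False
    define m where "m = Max (set w)"
    define L where "L = takeWhile (\<lambda>x. x \<noteq> m) w"
    define R where "R = tl (dropWhile (\<lambda>x. x \<noteq> m) w)"
    have e: "w = L @ m # R" "stack_sort w = stack_sort L @ stack_sort R @ [m]"
      unfolding m_def L_def R_def by (rule ss_decomp(1)[OF False], rule ss_decomp(2)[OF False])
    have "set (stack_sort L) = set L \<and> length (stack_sort L) = length L"
      using 1(1)[OF False m_def L_def R_def] .
    moreover have "set (stack_sort R) = set R \<and> length (stack_sort R) = length R"
      using 1(2)[OF False m_def L_def R_def] .
    moreover have "set w = set L \<union> set R \<union> {m}" "length w = length L + length R + 1"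
      by (subst e(1); auto)+
    ultimately show ?thesis unfolding e(2) by auto
  qed
qed

lemma ss_relabel:
  assumes "strict_mono_on (set w) f"
  shows "stack_sort (map f w) = map f (stack_sort w)"
  using assms
proof (induction w rule: stack_sort.induct)
  case (1 w)
  show ?case
  proof (cases "w = []")
    case True then show ?thesis by (subst (1 2) stack_sort.simps) simp
  next
    case False
    define m where "m = Max (set w)"
    define L where "L = takeWhile (\<lambda>x. x \<noteq> m) w"
    define R where "R = tl (dropWhile (\<lambda>x. x \<noteq> m) w)"
    have e: "w = L @ m # R" "stack_sort w = stack_sort L @ stack_sort R @ [m]"
      unfolding m_def L_def R_def by (rule ss_decomp(1)[OF False], rule ss_decomp(2)[OF False])
    have mono: "\<And>x y. x \<in> set w \<Longrightarrow> y \<in> set w \<Longrightarrow> x < y \<Longrightarrow> f x < f y"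
      using 1(3) unfolding strict_mono_on_def by blast
    have mw: "m \<in> set w" using False unfolding m_def by simp
    have le: "x \<le> m" if "x \<in> set w" for x using that unfolding m_def using False by simp
    have lt: "x < m" if "x \<in> set w" "x \<noteq> m" for x using le[OF that(1)] that(2) by simp
    have IL: "stack_sort (map f L) = map f (stack_sort L)"
      by (rule 1(1)[OF False m_def L_def R_def]) (use 1(3) e(1) in \<open>auto simp: strict_mono_on_def\<close>)
    have IR: "stack_sort (map f R) = map f (stack_sort R)"
      by (rule 1(2)[OF False m_def L_def R_def]) (use 1(3) e(1) in \<open>auto simp: strict_mono_on_def\<close>)
    have inj: "inj_on f (set w)" using 1(3) by (rule strict_mono_on_imp_inj_on)
    have fm: "Max (set (map f w)) = f m"
      by (rule Max_eqI) (use mw le 1(3) in \<open>auto intro: strict_mono_on_leD\<close>)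
    have cong: "(f x \<noteq> f m) = (x \<noteq> m)" if "x \<in> set w" for x
      using inj mw that by (simp add: inj_on_eq_iff)
    have T: "takeWhile (\<lambda>x. x \<noteq> f m) (map f w) = map f L"
      unfolding L_def takeWhile_map o_def by (rule arg_cong[where f="map f"], rule takeWhile_cong) (simp_all add: cong)
    have D: "tl (dropWhile (\<lambda>x. x \<noteq> f m) (map f w)) = map f R"
      unfolding R_def dropWhile_map o_def map_tl by (rule arg_cong[where f="\<lambda>x. tl (map f x)"], rule dropWhile_cong) (simp_all add: cong)
    have "stack_sort (map f w) = stack_sort (map f L) @ stack_sort (map f R) @ [f m]"
      using False unfolding stack_sort.simps[of "map f w"] Let_def fm T D by simp
    then show ?thesis using e(2) IL IR by simp
  qed
qed


lemma ss_distinct: "distinct w \<Longrightarrow> distinct (stack_sort w)"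
  using ss_set_length[of w] by (metis card_distinct distinct_card)

definition PP :: "nat set \<Rightarrow> (nat list \<times> nat list) set" where
  "PP A = {(w, w'). distinct w \<and> set w = A \<and> distinct w' \<and> set w' = A \<and> stack_sort w = stack_sort w'}"

definition pc :: "nat \<Rightarrow> nat" where
  "pc n = card (PP {1..n})"

lemma PP_sub: "PP A \<subseteq> permutations_of_set A \<times> permutations_of_set A"
  unfolding PP_def permutations_of_set_def by auto

lemma finite_PP: "finite (PP A)"
  by (rule finite_subset[OF PP_sub]) simp

lemma perms_eq: "perms n = permutations_of_set {1..n}"
  unfolding perms_def permutations_of_set_def by auto

lemma sum_fib_sq:
  assumes "finite X" "finite Y" "f ` X \<subseteq> Y"
  shows "(\<Sum>y\<in>Y. card {x\<in>X. f x = y} ^ 2) = card {(x, x'). x \<in> X \<and> x' \<in> X \<and> f x = f x'}"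
proof -
  have eq: "{(x, x'). x \<in> X \<and> x' \<in> X \<and> f x = f x'} = (\<Union>y\<in>Y. {x\<in>X. f x = y} \<times> {x\<in>X. f x = y})"
    using assms(3) by auto
  have "card (\<Union>y\<in>Y. {x\<in>X. f x = y} \<times> {x\<in>X. f x = y}) = (\<Sum>y\<in>Y. card ({x\<in>X. f x = y} \<times> {x\<in>X. f x = y}))"
    by (rule card_UN_disjoint) (use assms in auto)
  also have "\<dots> = (\<Sum>y\<in>Y. card {x\<in>X. f x = y} ^ 2)"
    by (simp add: card_cartesian_product power2_eq_square)
  finally show ?thesis using eq by simp
qed

lemma map_deg_pc: "map_deg stack_sort (perms n) (perms n) = real (pc n) / fact n"
proof -
  have sub: "stack_sort ` perms n \<subseteq> perms n"
    unfolding perms_def using ss_set_length ss_distinct by auto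
  have "(\<Sum>y\<in>perms n. real (card {x\<in>perms n. stack_sort x = y}) ^ 2)
      = real (\<Sum>y\<in>perms n. card {x\<in>perms n. stack_sort x = y} ^ 2)" by simp
  also have "\<dots> = real (card {(x, x'). x \<in> perms n \<and> x' \<in> perms n \<and> stack_sort x = stack_sort x'})"
    by (subst sum_fib_sq) (use sub in \<open>auto simp: perms_eq\<close>)
  also have "{(x, x'). x \<in> perms n \<and> x' \<in> perms n \<and> stack_sort x = stack_sort x'} = PP {1..n}"
    unfolding perms_def PP_def by auto
  finally show ?thesis unfolding map_deg_def pc_def by (simp add: perms_eq)
qed

lemma PP_relabel_card:
  assumes mono: "strict_mono_on A f" and img: "f ` A = B"
  shows "card (PP B) = card (PP A)"
proof -
  define h where "h = (\<lambda>(w::nat list, w'::nat list). (map f w, map f w'))"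
  have inj: "inj_on f A" using mono by (rule strict_mono_on_imp_inj_on)
  have injm: "inj_on (map f) {xs. set xs \<subseteq> A}"
    by (rule inj_on_mapI) (use inj in \<open>auto intro: inj_on_subset\<close>)
  have "inj_on h (PP A)"
  proof (rule inj_onI)
    fix p q assume "p \<in> PP A" "q \<in> PP A" "h p = h q"
    then show "p = q" using injm unfolding h_def PP_def by (auto dest: inj_onD)
  qed
  moreover have "h ` PP A = PP B"
  proof
    show "h ` PP A \<subseteq> PP B"
    proof
      fix p assume "p \<in> h ` PP A"
      then obtain w w' where p: "p = (map f w, map f w')" and ww: "(w, w') \<in> PP A"
        unfolding h_def by auto
      have sw: "set w = A" "set w' = A" using ww unfolding PP_def by auto
      have "stack_sort (map f w) = map f (stack_sort w)" "stack_sort (map f w') = map f (stack_sort w')"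
        by (rule ss_relabel; use mono sw in simp)+
      then show "p \<in> PP B" using ww inj img unfolding p PP_def
        by (auto simp: distinct_map intro: inj_on_subset)
    qed
  next
    show "PP B \<subseteq> h ` PP A"
    proof
      fix p assume pB: "p \<in> PP B"
      then obtain v v' where p: "p = (v, v')" by (cases p)
      define g where "g = the_inv_into A f"
      have fg: "f (g y) = y" if "y \<in> B" for y
        unfolding g_def using f_the_inv_into_f[OF inj] that img by auto
      have gA: "g ` B = A" unfolding g_def using the_inv_into_onto[OF inj] img by simp
      have injg: "inj_on g B" unfolding g_def using inj_on_the_inv_into[OF inj] img by simp
      have v: "distinct v" "set v = B" "distinct v'" "set v' = B" "stack_sort v = stack_sort v'"
        using pB unfolding p PP_def by auto
      define w where "w = map g v"
      define w' where "w' = map g v'"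
      have fw: "map f w = v" "map f w' = v'"
        unfolding w_def w'_def map_map o_def by (rule map_idI; use fg v in auto)+
      have dw: "distinct w" "distinct w'" "set w = A" "set w' = A"
        unfolding w_def w'_def using v injg gA by (auto simp: distinct_map)
      have "map f (stack_sort w) = map f (stack_sort w')"
        using ss_relabel[of w f] ss_relabel[of w' f] mono dw fw v(5) by simp
      moreover have "set (stack_sort w) \<subseteq> A" "set (stack_sort w') \<subseteq> A"
        using ss_set_length dw by auto
      ultimately have "stack_sort w = stack_sort w'" using injm by (auto dest: inj_onD)
      then have "(w, w') \<in> PP A" using dw unfolding PP_def by auto
      then show "p \<in> h ` PP A" unfolding p h_def using fw by force
    qed
  qed
  ultimately show ?thesis by (metis card_image)
qed

lemma PP_card:
  assumes "finite A"
  shows "card (PP A) = pc (card A)"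
proof -
  define xs where "xs = sorted_list_of_set A"
  define f where "f = (\<lambda>i. xs ! (i - 1))"
  have sw: "sorted_wrt (<) xs" and sx: "set xs = A" and lx: "length xs = card A"
    unfolding xs_def using assms by auto
  have "strict_mono_on {1..card A} f"
  proof (rule strict_mono_onI)
    fix r s assume "r \<in> {1..card A}" "s \<in> {1..card A}" "r < s"
    then have "r - 1 < s - 1" "s - 1 < length xs" using lx by auto
    then show "f r < f s" unfolding f_def using sorted_wrt_nth_less[OF sw] by blast
  qed
  moreover have "f ` {1..card A} = A"
  proof -
    have "f ` {1..card A} = (\<lambda>i. xs ! i) ` {0..<card A}"
    proof -
      have "{1..card A} = Suc ` {0..<card A}" by (simp add: image_Suc_atLeastLessThan atLeastLessThanSuc_atLeastAtMost)
      then have "f ` {1..card A} = (f \<circ> Suc) ` {0..<card A}" by (simp only: image_comp)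
      moreover have "f \<circ> Suc = (\<lambda>i. xs ! i)" unfolding f_def by auto
      ultimately show ?thesis by simp
    qed
    also have "\<dots> = set xs" using lx by (auto simp: set_conv_nth)
    finally show ?thesis using sx by simp
  qed
  ultimately show ?thesis unfolding pc_def by (rule PP_relabel_card)
qed


lemma sum_Pow_card:
  assumes "finite S"
  shows "(\<Sum>A\<in>Pow S. g (card A)) = (\<Sum>k<Suc (card S). (card S choose k) * g (card A0 + k - card A0))"
proof -
  have "(\<Sum>A\<in>Pow S. g (card A)) = (\<Sum>k<Suc (card S). \<Sum>A\<in>{A. A \<in> Pow S \<and> card A = k}. g (card A))"
    by (rule sum.group[symmetric]) (use assms in \<open>auto simp: le_imp_less_Suc card_mono\<close>)
  also have "\<dots> = (\<Sum>k<Suc (card S). (card S choose k) * g k)"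
  proof (rule sum.cong[OF refl])
    fix k
    have "(\<Sum>A\<in>{A. A \<in> Pow S \<and> card A = k}. g (card A)) = (\<Sum>A\<in>{A. A \<subseteq> S \<and> card A = k}. g k)"
      by (rule sum.cong) auto
    also have "\<dots> = (card S choose k) * g k" using n_subsets[OF assms, of k] by simp
    finally show "(\<Sum>A\<in>{A. A \<in> Pow S \<and> card A = k}. g (card A)) = (card S choose k) * g k" .
  qed
  finally show ?thesis by simp
qed

lemma pc_rec:
  assumes "N \<ge> 1"
  shows "(\<Sum>k<N. (N - 1 choose k) * (pc k * pc (N - 1 - k))) \<le> pc N"
proof -
  define S where "S = {1..<N}"
  have fS: "finite S" and cS: "card S = N - 1" and NS: "N \<notin> S" unfolding S_def by auto
  define Sg where "Sg = Sigma (Pow S) (\<lambda>A. PP A \<times> PP (S - A))"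
  define \<Phi> where "\<Phi> = (\<lambda>(A::nat set, ((L::nat list, L'::nat list), (R::nat list, R'::nat list))). (L @ N # R, L' @ N # R'))"
  have inj: "inj_on \<Phi> Sg"
  proof (rule inj_onI)
    fix p q assume p: "p \<in> Sg" and q: "q \<in> Sg" and e: "\<Phi> p = \<Phi> q"
    obtain A L L' R R' where pp: "p = (A, ((L, L'), (R, R')))" by (metis prod.collapse)
    obtain B M M' Q Q' where qq: "q = (B, ((M, M'), (Q, Q')))" by (metis prod.collapse)
    have sets: "set L = A" "set L' = A" "set M = B" "set M' = B" "A \<subseteq> S" "B \<subseteq> S"
       "set R = S - A" "set R' = S - A"
      using p q unfolding pp qq Sg_def PP_def by auto
    have "N \<notin> set L" "N \<notin> set L'" "N \<notin> set R" "N \<notin> set R'" using sets NS by auto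
    then have "L = M \<and> R = Q" "L' = M' \<and> R' = Q'"
      using e unfolding pp qq \<Phi>_def by (simp_all add: append_Cons_eq_iff)
    then show "p = q" unfolding pp qq using sets by auto
  qed
  have img: "\<Phi> ` Sg \<subseteq> PP {1..N}"
  proof
    fix x assume "x \<in> \<Phi> ` Sg"
    then obtain A L L' R R' where x: "x = (L @ N # R, L' @ N # R')" and
      AS: "A \<subseteq> S" and l: "(L, L') \<in> PP A" and r: "(R, R') \<in> PP (S - A)"
      unfolding Sg_def \<Phi>_def by auto
    have l2: "distinct L" "distinct L'" "set L = A" "set L' = A" "stack_sort L = stack_sort L'"
      and r2: "distinct R" "distinct R'" "set R = S - A" "set R' = S - A" "stack_sort R = stack_sort R'"
      using l r unfolding PP_def by auto
    have lt: "\<forall>x\<in>set L. x < N" "\<forall>x\<in>set R. x < N" "\<forall>x\<in>set L'. x < N" "\<forall>x\<in>set R'. x < N"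
      using l2 r2 AS unfolding S_def by auto
    have "set (L @ N # R) = {1..N}" "set (L' @ N # R') = {1..N}"
      using l2 r2 AS assms unfolding S_def by auto
    moreover have "distinct (L @ N # R)" "distinct (L' @ N # R')"
      using l2 r2 AS NS by auto
    moreover have "stack_sort (L @ N # R) = stack_sort (L' @ N # R')"
      using ss_split lt l2 r2 by simp
    ultimately show "x \<in> PP {1..N}" unfolding x PP_def by auto
  qed
  have fSg: "finite Sg" unfolding Sg_def using fS finite_PP by auto
  have "card Sg \<le> pc N" unfolding pc_def
    using card_inj_on_le[OF inj img] finite_PP by simp
  moreover have "card Sg = (\<Sum>A\<in>Pow S. pc (card A) * pc (N - 1 - card A))"
  proof -
    have "card Sg = (\<Sum>A\<in>Pow S. card (PP A \<times> PP (S - A)))"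
      unfolding Sg_def using fS finite_PP by (subst card_SigmaI) auto
    also have "\<dots> = (\<Sum>A\<in>Pow S. pc (card A) * pc (N - 1 - card A))"
    proof (rule sum.cong[OF refl])
      fix A assume "A \<in> Pow S"
      then have "A \<subseteq> S" "finite A" using fS finite_subset by auto
      then have "card (S - A) = N - 1 - card A" using cS fS by (simp add: card_Diff_subset)
      then show "card (PP A \<times> PP (S - A)) = pc (card A) * pc (N - 1 - card A)"
        using PP_card \<open>finite A\<close> fS by (simp add: card_cartesian_product)
    qed
    finally show ?thesis .
  qed
  moreover have "(\<Sum>A\<in>Pow S. pc (card A) * pc (N - 1 - card A)) = (\<Sum>k<N. (N - 1 choose k) * (pc k * pc (N - 1 - k)))"
    using sum_Pow_card[OF fS, of "\<lambda>k. pc k * pc (N - 1 - k)" "{}"] cS assms by simp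
  ultimately show ?thesis by simp
qed


function enc :: "nat list \<Rightarrow> bool list" where
  "enc w =
     (if w = [] then []
      else (let m = Max (set w);
                L = takeWhile (\<lambda>x. x \<noteq> m) w;
                R = tl (dropWhile (\<lambda>x. x \<noteq> m) w)
            in True # enc L @ False # enc R))"
  by pat_completeness auto
termination
proof (relation "measure length", goal_cases)
  case 1 then show ?case by auto
next
  case (2 w m L)
  have "m \<in> set w" using 2 by simp
  then have "dropWhile (\<lambda>x. x \<noteq> m) w \<noteq> []" by (simp add: dropWhile_eq_Nil_conv)
  moreover have "length w = length L + length (dropWhile (\<lambda>x. x \<noteq> m) w)"
    using 2 by (simp add: length_append[symmetric] del: length_append)
  ultimately show ?case by simp
next
  case (3 w m L R)
  have "m \<in> set w" using 3 by simp
  then have "dropWhile (\<lambda>x. x \<noteq> m) w \<noteq> []" by (simp add: dropWhile_eq_Nil_conv)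
  moreover have "length (dropWhile (\<lambda>x. x \<noteq> m) w) \<le> length w" by (rule length_dropWhile_le)
  ultimately have "length (dropWhile (\<lambda>x. x \<noteq> m) w) - 1 < length w"
    by (cases "dropWhile (\<lambda>x. x \<noteq> m) w") auto
  then show ?case using 3 by simp
qed

declare enc.simps[simp del]

lemma enc_Nil[simp]: "enc [] = []"
  by (subst enc.simps) simp

lemma enc_decomp:
  assumes "w \<noteq> []"
  shows "enc w = True # enc (takeWhile (\<lambda>x. x \<noteq> Max (set w)) w) @ False #
                  enc (tl (dropWhile (\<lambda>x. x \<noteq> Max (set w)) w))"
  using assms unfolding enc.simps[of w] Let_def by simp

lemma enc_length: "length (enc w) = 2 * length w"
proof (induction w rule: enc.induct)
  case (1 w)
  show ?case
  proof (cases "w = []")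
    case True then show ?thesis by simp
  next
    case False
    define m where "m = Max (set w)"
    define L where "L = takeWhile (\<lambda>x. x \<noteq> m) w"
    define R where "R = tl (dropWhile (\<lambda>x. x \<noteq> m) w)"
    have e: "w = L @ m # R" unfolding m_def L_def R_def by (rule ss_decomp(1)[OF False])
    have "enc w = True # enc L @ False # enc R" unfolding L_def R_def m_def by (rule enc_decomp[OF False])
    moreover have "length (enc L) = 2 * length L" using 1(1)[OF False m_def L_def R_def] .
    moreover have "length (enc R) = 2 * length R" using 1(2)[OF False m_def L_def R_def] .
    moreover have "length w = length L + length R + 1" by (subst e) simp
    ultimately show ?thesis by simp
  qed
qed

lemma enc_Cons: "w \<noteq> [] \<Longrightarrow> \<exists>t. enc w = True # t"
  using enc_decomp by blast

lemma enc_prefix: "enc u @ False # X = enc v @ False # Y \<Longrightarrow> enc u = enc v"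
proof (induction u arbitrary: v X Y rule: enc.induct)
  case (1 u)
  show ?case
  proof (cases "u = []")
    case True
    then show ?thesis using 1(3) enc_Cons[of v] by (cases "v = []") auto
  next
    case False
    define m where "m = Max (set u)"
    define L where "L = takeWhile (\<lambda>x. x \<noteq> m) u"
    define R where "R = tl (dropWhile (\<lambda>x. x \<noteq> m) u)"
    have eu: "enc u = True # enc L @ False # enc R" unfolding L_def R_def m_def by (rule enc_decomp[OF False])
    show ?thesis
    proof (cases "v = []")
      case True
      then show ?thesis using 1(3) eu by simp
    next
      case vF: False
      define m2 where "m2 = Max (set v)"
      define L2 where "L2 = takeWhile (\<lambda>x. x \<noteq> m2) v"
      define R2 where "R2 = tl (dropWhile (\<lambda>x. x \<noteq> m2) v)"
      have ev: "enc v = True # enc L2 @ False # enc R2" unfolding L2_def R2_def m2_def by (rule enc_decomp[OF vF])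
      have h: "enc L @ False # (enc R @ False # X) = enc L2 @ False # (enc R2 @ False # Y)"
        using 1(3) eu ev by simp
      have hL: "enc L = enc L2" using 1(1)[OF False m_def L_def R_def h] .
      then have h2: "enc R @ False # X = enc R2 @ False # Y" using h by simp
      have "enc R = enc R2" using 1(2)[OF False m_def L_def R_def h2] .
      then show ?thesis using eu ev hL by simp
    qed
  qed
qed

lemma enc_inj: "stack_sort w = stack_sort w' \<Longrightarrow> enc w = enc w' \<Longrightarrow> w = w'"
proof (induction w arbitrary: w' rule: enc.induct)
  case (1 w)
  show ?case
  proof (cases "w = []")
    case True
    then show ?thesis using 1(4) enc_Cons[of w'] by (cases "w' = []") auto
  next
    case False
    define m where "m = Max (set w)"
    define L where "L = takeWhile (\<lambda>x. x \<noteq> m) w"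
    define R where "R = tl (dropWhile (\<lambda>x. x \<noteq> m) w)"
    have e: "w = L @ m # R" "stack_sort w = stack_sort L @ stack_sort R @ [m]"
      unfolding m_def L_def R_def by (rule ss_decomp(1)[OF False], rule ss_decomp(2)[OF False])
    have eu: "enc w = True # enc L @ False # enc R" unfolding L_def R_def m_def by (rule enc_decomp[OF False])
    have vF: "w' \<noteq> []" using 1(4) eu by auto
    define m2 where "m2 = Max (set w')"
    define L2 where "L2 = takeWhile (\<lambda>x. x \<noteq> m2) w'"
    define R2 where "R2 = tl (dropWhile (\<lambda>x. x \<noteq> m2) w')"
    have e2: "w' = L2 @ m2 # R2" "stack_sort w' = stack_sort L2 @ stack_sort R2 @ [m2]"
      unfolding m2_def L2_def R2_def by (rule ss_decomp(1)[OF vF], rule ss_decomp(2)[OF vF])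
    have ev: "enc w' = True # enc L2 @ False # enc R2" unfolding L2_def R2_def m2_def by (rule enc_decomp[OF vF])
    have h: "enc L @ False # enc R = enc L2 @ False # enc R2" using 1(4) eu ev by simp
    have hL: "enc L = enc L2" using enc_prefix[OF h] .
    then have hR: "enc R = enc R2" using h by simp
    have len: "length L = length L2" using hL enc_length[of L] enc_length[of L2] by simp
    have ss: "stack_sort L @ stack_sort R @ [m] = stack_sort L2 @ stack_sort R2 @ [m2]"
      using 1(3) e(2) e2(2) by simp
    have "length (stack_sort L) = length (stack_sort L2)" using len ss_set_length by metis
    then have sL: "stack_sort L = stack_sort L2" and rest: "stack_sort R @ [m] = stack_sort R2 @ [m2]"
      using ss by auto
    then have sR: "stack_sort R = stack_sort R2" and mm: "m = m2" by auto
    have "L = L2" using 1(1)[OF False m_def L_def R_def sL hL] .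
    moreover have "R = R2" using 1(2)[OF False m_def L_def R_def sR hR] .
    ultimately show ?thesis using e(1) e2(1) mm by simp
  qed
qed

lemma pc_upper: "pc n \<le> fact n * 4 ^ n"
proof -
  define X where "X = permutations_of_set {1..n} \<times> {bs :: bool list. set bs \<subseteq> UNIV \<and> length bs = 2 * n}"
  define h where "h = (\<lambda>(w :: nat list, w' :: nat list). (w, enc w'))"
  have "inj_on h (PP {1..n})"
    by (rule inj_onI) (auto simp: h_def PP_def intro: enc_inj)
  moreover have "h ` PP {1..n} \<subseteq> X"
    unfolding h_def X_def PP_def permutations_of_set_def by (auto simp: enc_length) (metis distinct_card card_atLeastAtMost diff_Suc_Suc diff_zero)
  moreover have "finite X" unfolding X_def using finite_lists_length_eq[of "UNIV :: bool set"] by simp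
  ultimately have "pc n \<le> card X" unfolding pc_def by (rule card_inj_on_le)
  also have "card X = fact n * 4 ^ n"
  proof -
    have "card {bs :: bool list. set bs \<subseteq> UNIV \<and> length bs = 2 * n} = 2 ^ (2 * n)"
      using card_lists_length_eq[of "UNIV :: bool set" "2 * n"] by simp
    also have "(2::nat) ^ (2 * n) = 4 ^ n" by (simp add: power_mult)
    finally show ?thesis unfolding X_def by (simp add: card_cartesian_product del: subset_UNIV)
  qed
  finally show ?thesis .
qed

lemma pc0: "pc 0 = 1"
proof -
  have "PP {1..0} = {([], [])}" unfolding PP_def by auto
  then show ?thesis unfolding pc_def by simp
qed

lemma ss12: "stack_sort [1, 2] = [1, 2]" "stack_sort [2, 1] = [1, 2]"
proof -
  have s1: "stack_sort [1] = [1]" using ss_split[of "[]" 1 "[]"] by simp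
  show "stack_sort [1, 2] = [1, 2]" using ss_split[of "[1]" 2 "[]"] s1 by simp
  show "stack_sort [2, 1] = [1, 2]" using ss_split[of "[]" 2 "[1]"] s1 by simp
qed

lemma pc2: "pc 2 \<ge> 4"
proof -
  have "{([1,2],[1,2]),([1,2],[2,1]),([2,1],[1,2]),([2,1],[2,1])} \<subseteq> PP {1..2}"
    unfolding PP_def using ss12 by auto
  from card_mono[OF finite_PP this] show ?thesis unfolding pc_def by simp
qed


definition aa :: "nat \<Rightarrow> real" where "aa n = real (pc n) / fact n"

lemma aa_rec:
  assumes "N \<ge> 1"
  shows "(\<Sum>k<N. aa k * aa (N - 1 - k)) \<le> real N * aa N"
proof -
  have "real (\<Sum>k<N. (N - 1 choose k) * (pc k * pc (N - 1 - k))) \<le> real (pc N)"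
    using pc_rec[OF assms] by (rule of_nat_mono)
  then have A: "(\<Sum>k<N. real (N - 1 choose k) * (real (pc k) * real (pc (N - 1 - k)))) \<le> real (pc N)"
    by simp
  have "(\<Sum>k<N. aa k * aa (N - 1 - k)) = (\<Sum>k<N. real (N - 1 choose k) * (real (pc k) * real (pc (N - 1 - k)))) / fact (N - 1)"
    unfolding sum_divide_distrib
  proof (rule sum.cong[OF refl])
    fix k assume "k \<in> {..<N}"
    then have k: "k \<le> N - 1" by simp
    have "real (N - 1 choose k) = fact (N - 1) / (fact k * fact (N - 1 - k))"
      by (rule binomial_fact[OF k])
    then show "aa k * aa (N - 1 - k) = real (N - 1 choose k) * (real (pc k) * real (pc (N - 1 - k))) / fact (N - 1)"
      unfolding aa_def by (simp add: field_simps)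
  qed
  also have "\<dots> \<le> real (pc N) / fact (N - 1)"
    using A by (simp add: divide_right_mono)
  also have "\<dots> = real N * aa N"
  proof -
    have "fact N = real N * fact (N - 1)" using assms by (metis fact_nonzero fact_num_eq_if of_nat_eq_0_iff not_one_le_zero)
    moreover have "real N \<noteq> 0" using assms by simp
    ultimately show ?thesis unfolding aa_def by simp
  qed
  finally show ?thesis .
qed

lemma aa0: "aa 0 = 1" unfolding aa_def using pc0 by simp

lemma aa_ge1: "1 \<le> aa n"
proof (induction n rule: less_induct)
  case (less N)
  show ?case
  proof (cases "N = 0")
    case True then show ?thesis using aa0 by simp
  next
    case False
    have "(\<Sum>k<N. (1::real)) \<le> (\<Sum>k<N. aa k * aa (N - 1 - k))"
    proof (rule sum_mono)
      fix k assume "k \<in> {..<N}"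
      then have "1 \<le> aa k" "1 \<le> aa (N - 1 - k)" using less False by auto
      then show "1 \<le> aa k * aa (N - 1 - k)" by (metis mult_mono mult_1 zero_le_one order_trans)
    qed
    also have "\<dots> \<le> real N * aa N" using aa_rec False by simp
    finally show ?thesis using False by simp
  qed
qed

lemma aa_le4: "aa n \<le> 4 ^ n"
proof -
  have "real (pc n) \<le> real (fact n * 4 ^ n)" using pc_upper by (rule of_nat_mono)
  then show ?thesis unfolding aa_def by (simp add: divide_le_eq mult.commute)
qed

lemma aa_sup: "aa i * aa j \<le> real (i + j + 1) * aa (i + j + 1)"
proof -
  have "aa i * aa (i + j + 1 - 1 - i) \<le> (\<Sum>k<i + j + 1. aa k * aa (i + j + 1 - 1 - k))"
    by (rule member_le_sum) (use aa_ge1 in \<open>auto intro: mult_nonneg_nonneg order_trans[OF zero_le_one]\<close>)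
  also have "\<dots> \<le> real (i + j + 1) * aa (i + j + 1)" by (rule aa_rec) simp
  finally show ?thesis by simp
qed

definition dl :: "nat \<Rightarrow> real" where
  "dl k = (if k = 0 then -1/9 else if k = 1 then -17/81 else if k = 2 then 295/729 else 0)"

lemma dl_sum: "N \<ge> 3 \<Longrightarrow> (\<Sum>k<N. dl k) = 61/729"
proof (induction N rule: dec_induct)
  case base then show ?case by (simp add: numeral_eq_Suc dl_def)
next
  case (step N) then show ?case by (simp add: dl_def)
qed

lemma rho_sum:
  assumes "N \<ge> 6"
  shows "(\<Sum>k<N. (1 + dl k) * (1 + dl (N - 1 - k))) = real N + 2 * (61/729)"
proof -
  have "(\<Sum>k<N. (1 + dl k) * (1 + dl (N - 1 - k))) = (\<Sum>k<N. 1 + dl k + dl (N - 1 - k))"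
  proof (rule sum.cong[OF refl])
    fix k assume "k \<in> {..<N}"
    then have "dl k * dl (N - 1 - k) = 0" using assms unfolding dl_def by auto
    then show "(1 + dl k) * (1 + dl (N - 1 - k)) = 1 + dl k + dl (N - 1 - k)" by (simp add: algebra_simps)
  qed
  also have "\<dots> = real N + (\<Sum>k<N. dl k) + (\<Sum>k<N. dl (N - 1 - k))"
    by (simp add: sum.distrib)
  also have "(\<Sum>k<N. dl (N - 1 - k)) = (\<Sum>k<N. dl k)"
    using sum.nat_diff_reindex[of dl N] by simp
  finally show ?thesis using dl_sum[of N] assms by simp
qed

lemma aa_low_rho: "(1 + dl n) * (9/8) ^ (n + 1) \<le> aa n"
proof (induction n rule: less_induct)
  case (less N)
  have a0: "aa 0 = 1" by (rule aa0)
  have a1: "1 \<le> aa 1" by (rule aa_ge1)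
  have a2: "2 \<le> aa 2" unfolding aa_def using pc2 by simp
  have r3: "aa 0 * aa 2 + aa 1 * aa 1 + aa 2 * aa 0 \<le> 3 * aa 3"
    using aa_rec[of 3] by (simp add: numeral_eq_Suc)
  have a3: "5/3 \<le> aa 3"
  proof -
    have "1 \<le> aa 1 * aa 1" using a1 by (metis mult_mono mult_1 zero_le_one order_trans)
    moreover have "aa 2 + aa 1 * aa 1 + aa 2 \<le> 3 * aa 3" using r3 a0 by simp
    ultimately show ?thesis using a2 by linarith
  qed
  have r4: "aa 0 * aa 3 + aa 1 * aa 2 + aa 2 * aa 1 + aa 3 * aa 0 \<le> 4 * aa 4"
    using aa_rec[of 4] by (simp add: numeral_eq_Suc)
  have a4: "11/6 \<le> aa 4"
  proof -
    have "2 \<le> aa 1 * aa 2" using mult_mono[OF a1 a2] a1 by simp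
    moreover have "aa 3 + aa 1 * aa 2 + aa 2 * aa 1 + aa 3 \<le> 4 * aa 4" using r4 a0 by simp
    moreover have "aa 2 * aa 1 = aa 1 * aa 2" by (rule mult.commute)
    ultimately show ?thesis using a3 by linarith
  qed
  have r5: "aa 0 * aa 4 + aa 1 * aa 3 + aa 2 * aa 2 + aa 3 * aa 1 + aa 4 * aa 0 \<le> 5 * aa 5"
    using aa_rec[of 5] by (simp add: numeral_eq_Suc)
  have a5: "11/5 \<le> aa 5"
  proof -
    have "5/3 \<le> aa 1 * aa 3" using mult_mono[OF a1 a3] a1 by simp
    moreover have "4 \<le> aa 2 * aa 2" using a2 mult_mono[OF a2 a2] by simp
    moreover have "aa 4 + aa 1 * aa 3 + aa 2 * aa 2 + aa 3 * aa 1 + aa 4 \<le> 5 * aa 5" using r5 a0 by simp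
    moreover have "aa 3 * aa 1 = aa 1 * aa 3" by (rule mult.commute)
    ultimately show ?thesis using a4 by linarith
  qed
  show ?case
  proof (cases "N \<le> 5")
    case True
    then have "N = 0 \<or> N = 1 \<or> N = 2 \<or> N = 3 \<or> N = 4 \<or> N = 5" by auto
    then show ?thesis using a0 a1 a2 a3 a4 a5 by (auto simp: dl_def eval_nat_numeral)
  next
    case False
    then have N6: "N \<ge> 6" by simp
    have "(\<Sum>k<N. (9/8) ^ (N + 1) * ((1 + dl k) * (1 + dl (N - 1 - k)))) \<le> (\<Sum>k<N. aa k * aa (N - 1 - k))"
    proof (rule sum_mono)
      fix k assume k: "k \<in> {..<N}"
      have p1: "(1 + dl k) * (9/8) ^ (k + 1) \<le> aa k" using less k by simp
      have p2: "(1 + dl (N - 1 - k)) * (9/8) ^ (N - 1 - k + 1) \<le> aa (N - 1 - k)" using less k N6 by simp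
      have n1: "0 \<le> (1 + dl k) * (9/8) ^ (k + 1)" "0 \<le> (1 + dl (N - 1 - k)) * (9/8) ^ (N - 1 - k + 1)"
        unfolding dl_def by auto
      have "(1 + dl k) * (9/8) ^ (k + 1) * ((1 + dl (N - 1 - k)) * (9/8) ^ (N - 1 - k + 1)) \<le> aa k * aa (N - 1 - k)"
        by (rule mult_mono[OF p1 p2]) (use n1 p1 in auto)
      moreover have "(9/8::real) ^ (k + 1) * (9/8) ^ (N - 1 - k + 1) = (9/8) ^ (N + 1)"
      proof -
        have "k + 1 + (N - 1 - k + 1) = N + 1" using k by simp
        then show ?thesis by (simp only: power_add[symmetric])
      qed
      ultimately show "(9/8) ^ (N + 1) * ((1 + dl k) * (1 + dl (N - 1 - k))) \<le> aa k * aa (N - 1 - k)"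
        by (metis (no_types, lifting) mult.assoc mult.commute mult.left_commute)
    qed
    also have "\<dots> \<le> real N * aa N" using aa_rec N6 by simp
    finally have "(9/8) ^ (N + 1) * (real N + 2 * (61/729)) \<le> real N * aa N"
      unfolding sum_distrib_left[symmetric] rho_sum[OF N6] .
    moreover have "real N * (9/8) ^ (N + 1) \<le> (9/8) ^ (N + 1) * (real N + 2 * (61/729))"
      by (simp add: algebra_simps)
    ultimately have "real N * (9/8) ^ (N + 1) \<le> real N * aa N" by linarith
    then have "(9/8) ^ (N + 1) \<le> aa N" using N6 by simp
    then show ?thesis using N6 unfolding dl_def by simp
  qed
qed

lemma aa_low: "n \<ge> 2 \<Longrightarrow> (9/8) ^ (n + 1) \<le> aa n"
proof -
  assume "n \<ge> 2"
  then have "1 \<le> 1 + dl n" unfolding dl_def by auto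
  then have "(9/8) ^ (n + 1) \<le> (1 + dl n) * (9/8::real) ^ (n + 1)" by simp
  then show ?thesis using aa_low_rho[of n] by linarith
qed




locale seqa =
  fixes a :: "nat \<Rightarrow> real"
  assumes ge1: "\<And>n. 1 \<le> a n"
  and le4: "\<And>n. a n \<le> 4 ^ n"
  and sup: "\<And>i j. a i * a j \<le> real (i + j + 1) * a (i + j + 1)"
  and low: "\<And>n. n \<ge> 2 \<Longrightarrow> (9/8) ^ (n + 1) \<le> a n"
begin

definition h :: "nat \<Rightarrow> real" where "h n = ln (a n)"

lemma a_pos: "0 < a n" using ge1[of n] by simp

lemma h_ge0: "0 \<le> h n" unfolding h_def using ge1[of n] by simp

lemma h_le: "h n \<le> real n * ln 4"
proof -
  have "h n \<le> ln (4 ^ n)" unfolding h_def using le4[of n] a_pos[of n] by simp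
  also have "\<dots> = real n * ln 4" by (simp add: ln_realpow)
  finally show ?thesis .
qed

lemma h_sup: "h i + h j - ln (real (i + j + 1)) \<le> h (i + j + 1)"
proof -
  have "ln (a i * a j) \<le> ln (real (i + j + 1) * a (i + j + 1))"
    by (rule ln_mono[OF sup[of i j]]) (use a_pos[of i] a_pos[of j] in simp)
  then show ?thesis unfolding h_def using a_pos[of i] a_pos[of j] a_pos[of "i+j+1"]
    by (simp add: ln_mult)
qed

lemma h_low: "n \<ge> 2 \<Longrightarrow> real n * ln (9/8) \<le> h n"
proof -
  assume n: "n \<ge> 2"
  have A: "ln ((9/8) ^ (n+1)) \<le> h n" unfolding h_def by (rule ln_mono[OF low[OF n]]) simp
  have B: "ln ((9/8::real) ^ (n+1)) = real (n + 1) * ln (9/8)" by (rule ln_realpow)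
  have D: "real (n + 1) * ln (9/8) \<le> h n" using A B by linarith
  have "real n * ln (9/8::real) \<le> real (n + 1) * ln (9/8)"
    by (rule mult_right_mono) auto
  then show ?thesis using D by linarith
qed

definition K :: "nat \<Rightarrow> real" where "K m = 8 + ln (real m + 1)"

lemma K_pos: "0 \<le> K m" unfolding K_def by (simp add: add_nonneg_nonneg)

lemma block:
  assumes "q \<ge> 1"
  shows "real q * h m - K m * (real q - 1) + 2 * ln (real q) \<le> h (q * (m + 1) - 1)"
  using assms
proof (induction q rule: less_induct)
  case (less q)
  show ?case
  proof (cases "q = 1")
    case True then show ?thesis by simp
  next
    case False
    define q1 where "q1 = q div 2"
    define q2 where "q2 = q - q1"
    have q1: "q1 \<ge> 1" "q1 < q" and q2: "q2 \<ge> 1" "q2 < q" "q1 \<le> q2"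
      using False less.prems unfolding q1_def q2_def by auto
    have "q = 2 * q1 + q mod 2" unfolding q1_def by simp
    moreover have "q mod 2 \<le> 1" by simp
    ultimately have "q \<le> 3 * q1" using q1(1) by linarith
    then have "real q \<le> real (3 * q1)" by (rule of_nat_mono)
    then have q3: "real q \<le> 3 * real q1" by simp
    have "q = q1 + q2" unfolding q2_def using q1 by simp
    have T: "q * (m + 1) - 1 = (q1 * (m + 1) - 1) + (q2 * (m + 1) - 1) + 1"
    proof -
      from \<open>q = q1 + q2\<close> have "q * (m + 1) = q1 * (m + 1) + q2 * (m + 1)" by (simp add: add_mult_distrib)
      moreover have "q1 * (m + 1) \<ge> 1" "q2 * (m + 1) \<ge> 1" using q1 q2 by simp_all
      ultimately show ?thesis by linarith
    qed
    have I1: "real q1 * h m - K m * (real q1 - 1) + 2 * ln (real q1) \<le> h (q1 * (m + 1) - 1)"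
      using less.IH[OF q1(2) q1(1)] .
    have I2: "real q2 * h m - K m * (real q2 - 1) + 2 * ln (real q2) \<le> h (q2 * (m + 1) - 1)"
      using less.IH[OF q2(2) q2(1)] .
    have S: "h (q1 * (m + 1) - 1) + h (q2 * (m + 1) - 1) - ln (real (q * (m + 1) - 1)) \<le> h (q * (m + 1) - 1)"
      using h_sup[of "q1 * (m + 1) - 1" "q2 * (m + 1) - 1"] unfolding T[symmetric] by simp
    have lnT: "ln (real (q * (m + 1) - 1)) \<le> ln (real q) + ln (real m + 1)"
    proof -
      have "q \<ge> 2" using q1 q2 \<open>q = q1 + q2\<close> by linarith
      moreover have "q \<le> q * (m + 1)" by simp
      ultimately have "q * (m + 1) \<ge> 2" by linarith
      then have "real (2::nat) \<le> real (q * (m + 1))" by (rule of_nat_mono)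
      then have r2: "2 \<le> real q * (real m + 1)" by (simp add: algebra_simps)
      have r: "real (q * (m + 1) - 1) = real q * (real m + 1) - 1"
        using \<open>q * (m + 1) \<ge> 2\<close> by (simp add: of_nat_diff algebra_simps)
      have "0 < real (q * (m + 1) - 1)" "real (q * (m + 1) - 1) \<le> real q * (real m + 1)"
        unfolding r using r2 by simp_all
      then have "ln (real (q * (m + 1) - 1)) \<le> ln (real q * (real m + 1))" by (rule ln_mono[rotated])
      then show ?thesis using less.prems by (simp add: ln_mult)
    qed
    have l1: "ln (real q) - ln 3 \<le> ln (real q1)"
    proof -
      have "ln (real q) \<le> ln (3 * real q1)" using q3 less.prems by simp
      then show ?thesis using q1 by (simp add: ln_mult)
    qed
    have l2: "ln (real q1) \<le> ln (real q2)" using q1 q2 by simp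
    have l3: "ln (3::real) \<le> 2" using ln_le_minus_one[of 3] by simp
    have lq: "0 \<le> ln (real q)" using less.prems by simp
    have qq: "real q = real q1 + real q2" unfolding q2_def using q1 by simp
    have e1: "K m * (real q1 - 1) = K m * real q1 - K m" by (simp add: right_diff_distrib)
    have e2: "K m * (real q2 - 1) = K m * real q2 - K m" by (simp add: right_diff_distrib)
    have e3: "K m * (real q - 1) = K m * real q1 + K m * real q2 - K m" by (simp add: qq algebra_simps)
    have e4: "real q * h m = real q1 * h m + real q2 * h m" by (simp add: qq algebra_simps)
    have Kd: "K m = 8 + ln (real m + 1)" unfolding K_def ..
    show ?thesis
      using I1 I2 S lnT l1 l2 l3 lq e1 e2 e3 e4 Kd by argo
  qed
qed

lemma general_lower:
  assumes "n \<ge> 1"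
  shows "real ((n + 1) div (m + 1)) * (h m - K m) - ln (real n) \<le> h n"
proof -
  define q where "q = (n + 1) div (m + 1)"
  have lnn: "0 \<le> ln (real n)" using assms by simp
  show ?thesis
  proof (cases "q = 0")
    case True then show ?thesis unfolding q_def[symmetric] using h_ge0[of n] lnn by simp
  next
    case False
    then have q1: "q \<ge> 1" by simp
    have B: "real q * h m - K m * (real q - 1) + 2 * ln (real q) \<le> h (q * (m + 1) - 1)"
      by (rule block[OF q1])
    have lq: "0 \<le> ln (real q)" using q1 by simp
    have B2: "real q * (h m - K m) \<le> h (q * (m + 1) - 1)"
      using B lq K_pos[of m] by (simp add: algebra_simps)
    have Tle: "q * (m + 1) - 1 \<le> n"
      unfolding q_def by (metis diff_le_mono div_mult_self1_is_m le_add_diff_inverse2 le_diff_conv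
          mult.commute div_times_less_eq_dividend zero_less_Suc add.commute Suc_eq_plus1 times_div_less_eq_dividend)
    show ?thesis
    proof (cases "q * (m + 1) - 1 = n")
      case True
      then show ?thesis using B2 lnn unfolding q_def[symmetric] by simp
    next
      case False
      define r where "r = n - (q * (m + 1) - 1) - 1"
      have nr: "n = (q * (m + 1) - 1) + r + 1" using False Tle unfolding r_def by simp
      have "h (q * (m + 1) - 1) + h r - ln (real n) \<le> h n"
        using h_sup[of "q * (m + 1) - 1" r] nr by simp
      then show ?thesis using B2 h_ge0[of r] unfolding q_def[symmetric] by simp
    qed
  qed
qed


definition c :: "nat \<Rightarrow> real" where "c m = (h m - K m) / (real m + 1)"

definition lam :: real where "lam = Sup (range c)"

lemma c_le: "c m \<le> ln 4"
proof -
  have "h m - K m \<le> (real m + 1) * ln 4"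
  proof -
    have "0 \<le> ln (4::real)" by simp
    moreover have "(real m + 1) * ln 4 = real m * ln 4 + ln 4" by (simp add: algebra_simps)
    ultimately show ?thesis using h_le[of m] K_pos[of m] by linarith
  qed
  then show ?thesis unfolding c_def by (simp add: divide_le_eq algebra_simps)
qed

lemma bdd: "bdd_above (range c)"
  by (rule bdd_aboveI[where M="ln 4"]) (use c_le in auto)

lemma c_le_lam: "c m \<le> lam"
  unfolding lam_def by (rule cSup_upper) (use bdd in auto)

lemma q_lim: "(\<lambda>n. real ((n + 1) div (m + 1)) / real n) \<longlonglongrightarrow> 1 / (real m + 1)"
proof (rule tendsto_sandwich)
  show "\<forall>\<^sub>F n in sequentially. ((real n + 1) / (real m + 1) - 1) / real n \<le> real ((n + 1) div (m + 1)) / real n"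
  proof (rule eventually_mono[OF eventually_ge_at_top[of 1]])
    fix n :: nat assume n: "n \<ge> 1"
    have d: "n + 1 = (n + 1) div (m + 1) * (m + 1) + (n + 1) mod (m + 1)" by (rule div_mult_mod_eq[symmetric])
    have "(n + 1) mod (m + 1) \<le> m" by (metis Suc_eq_plus1 less_Suc_eq_le mod_less_divisor zero_less_Suc)
    then have r1: "real ((n + 1) mod (m + 1)) \<le> real m" by (rule of_nat_mono)
    have r2: "real n + 1 = real ((n + 1) div (m + 1)) * (real m + 1) + real ((n + 1) mod (m + 1))"
      using arg_cong[OF d, of real] by (simp only: of_nat_add of_nat_mult of_nat_1)
    have "real n + 1 \<le> real ((n + 1) div (m + 1)) * (real m + 1) + (real m + 1)" using r1 r2 by linarith
    then have "(real n + 1) / (real m + 1) - 1 \<le> real ((n + 1) div (m + 1))"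
      by (simp add: divide_le_eq algebra_simps)
    then show "((real n + 1) / (real m + 1) - 1) / real n \<le> real ((n + 1) div (m + 1)) / real n"
      using n by (simp add: divide_right_mono)
  qed
  show "\<forall>\<^sub>F n in sequentially. real ((n + 1) div (m + 1)) / real n \<le> ((real n + 1) / (real m + 1)) / real n"
  proof (rule eventually_mono[OF eventually_ge_at_top[of 1]])
    fix n :: nat assume n: "n \<ge> 1"
    have d: "n + 1 = (n + 1) div (m + 1) * (m + 1) + (n + 1) mod (m + 1)" by (rule div_mult_mod_eq[symmetric])
    have "real n + 1 = real ((n + 1) div (m + 1)) * (real m + 1) + real ((n + 1) mod (m + 1))"
      using arg_cong[OF d, of real] by (simp only: of_nat_add of_nat_mult of_nat_1)
    then have "real ((n + 1) div (m + 1)) * (real m + 1) \<le> real n + 1" by linarith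
    then have "real ((n + 1) div (m + 1)) \<le> (real n + 1) / (real m + 1)"
      by (simp add: le_divide_eq algebra_simps)
    then show "real ((n + 1) div (m + 1)) / real n \<le> ((real n + 1) / (real m + 1)) / real n"
      by (rule divide_right_mono) simp
  qed
  have "(\<lambda>n. ((real n + 1) / (real m + 1) - 1) / real n) \<longlonglongrightarrow> inverse (real m + 1)"
    by real_asymp
  then show "(\<lambda>n. ((real n + 1) / (real m + 1) - 1) / real n) \<longlonglongrightarrow> 1 / (real m + 1)"
    by (simp add: inverse_eq_divide)
  have "(\<lambda>n. ((real n + 1) / (real m + 1)) / real n) \<longlonglongrightarrow> inverse (real m + 1)"
    by real_asymp
  then show "(\<lambda>n. ((real n + 1) / (real m + 1)) / real n) \<longlonglongrightarrow> 1 / (real m + 1)"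
    by (simp add: inverse_eq_divide)
qed

lemma x_lim: "(\<lambda>n. h n / real n) \<longlonglongrightarrow> lam"
proof (rule order_tendstoI)
  fix l assume "l < lam"
  then obtain m where lm: "l < c m"
    unfolding lam_def using less_cSup_iff[of "range c" l] bdd by auto
  define y where "y = (\<lambda>n. real ((n + 1) div (m + 1)) / real n * (h m - K m) - ln (real n) / real n)"
  have "y \<longlonglongrightarrow> 1 / (real m + 1) * (h m - K m) - 0"
    unfolding y_def
    by (intro tendsto_intros q_lim) real_asymp
  then have "y \<longlonglongrightarrow> c m" unfolding c_def by simp
  then have ev: "\<forall>\<^sub>F n in sequentially. l < y n" using lm by (rule order_tendstoD(1))
  show "\<forall>\<^sub>F n in sequentially. l < h n / real n"
    using eventually_conj[OF ev eventually_ge_at_top[of 1]]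
  proof (rule eventually_mono)
    fix n assume A: "l < y n \<and> 1 \<le> n"
    have "y n \<le> h n / real n"
    proof -
      have "real ((n + 1) div (m + 1)) * (h m - K m) - ln (real n) \<le> h n"
        using general_lower A by simp
      then have "(real ((n + 1) div (m + 1)) * (h m - K m) - ln (real n)) / real n \<le> h n / real n"
        using A by (simp add: divide_right_mono)
      then show ?thesis unfolding y_def by (simp add: diff_divide_distrib)
    qed
    then show "l < h n / real n" using A by simp
  qed
next
  fix u assume "lam < u"
  define z where "z = (\<lambda>n::nat. lam + lam / real n + (8 + ln (real n + 1)) / real n)"
  have t1: "(\<lambda>n::nat. 1 / real n) \<longlonglongrightarrow> 0" by real_asymp
  have t2: "(\<lambda>n::nat. (8 + ln (real n + 1)) / real n) \<longlonglongrightarrow> 0" by real_asymp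
  have "(\<lambda>n. lam + lam * (1 / real n) + (8 + ln (real n + 1)) / real n) \<longlonglongrightarrow> lam + lam * 0 + 0"
    by (intro tendsto_intros t1 t2)
  then have "z \<longlonglongrightarrow> lam" unfolding z_def by simp
  then have ev: "\<forall>\<^sub>F n in sequentially. z n < u" using \<open>lam < u\<close> by (rule order_tendstoD(2))
  show "\<forall>\<^sub>F n in sequentially. h n / real n < u"
    using eventually_conj[OF ev eventually_ge_at_top[of 1]]
  proof (rule eventually_mono)
    fix n :: nat assume A: "z n < u \<and> 1 \<le> n"
    have "c n \<le> lam" by (rule c_le_lam)
    then have "h n - K n \<le> lam * (real n + 1)" unfolding c_def by (simp add: divide_le_eq)
    then have "h n \<le> lam * real n + lam + (8 + ln (real n + 1))" unfolding K_def by (simp add: algebra_simps)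
    then have "h n / real n \<le> (lam * real n + lam + (8 + ln (real n + 1))) / real n"
      using A by (simp add: divide_right_mono)
    also have "\<dots> = z n" unfolding z_def using A by (simp add: field_simps)
    finally show "h n / real n < u" using A by simp
  qed
qed

lemma final: "\<exists>L::real. (\<lambda>n. a n powr (1 / real n)) \<longlonglongrightarrow> L \<and> 1.12462 \<le> L \<and> L \<le> 4"
proof (intro exI conjI)
  have eq: "(\<lambda>n. a n powr (1 / real n)) = (\<lambda>n. exp (h n / real n))"
  proof (rule ext)
    fix n
    have "a n \<noteq> 0" using a_pos[of n] by simp
    then show "a n powr (1 / real n) = exp (h n / real n)" unfolding h_def powr_def by simp
  qed
  show "(\<lambda>n. a n powr (1 / real n)) \<longlonglongrightarrow> exp lam"
    unfolding eq by (intro tendsto_intros x_lim)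
  have "ln (9/8) \<le> lam"
  proof (rule tendsto_le[OF _ x_lim tendsto_const])
    show "\<forall>\<^sub>F n in sequentially. ln (9 / 8) \<le> h n / real n"
    proof (rule eventually_mono[OF eventually_ge_at_top[of 2]])
      fix n :: nat assume "n \<ge> 2"
      then show "ln (9 / 8) \<le> h n / real n" using h_low[of n] by (simp add: le_divide_eq algebra_simps)
    qed
  qed simp
  then have "exp (ln (9/8)) \<le> exp lam" by (simp only: exp_le_cancel_iff)
  moreover have "exp (ln (9/8::real)) = 9/8" by simp
  moreover have "(1.12462::real) \<le> 9/8" by simp
  ultimately show "1.12462 \<le> exp lam" by linarith
  have "lam \<le> ln 4"
  proof (rule tendsto_le[OF _ tendsto_const x_lim])
    show "\<forall>\<^sub>F n in sequentially. h n / real n \<le> ln 4"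
    proof (rule eventually_mono[OF eventually_ge_at_top[of 1]])
      fix n :: nat assume "n \<ge> 1"
      then show "h n / real n \<le> ln 4" using h_le[of n] by (simp add: divide_le_eq algebra_simps)
    qed
  qed simp
  then have "exp lam \<le> exp (ln 4)" by (simp only: exp_le_cancel_iff)
  moreover have "exp (ln (4::real)) = 4" by simp
  ultimately show "exp lam \<le> 4" by linarith
qed

end

lemma seqa_aa: "seqa aa"
proof
  show "\<And>n. 1 \<le> aa n" by (rule aa_ge1)
  show "\<And>n. aa n \<le> 4 ^ n" by (rule aa_le4)
  show "\<And>i j. aa i * aa j \<le> real (i + j + 1) * aa (i + j + 1)" by (rule aa_sup)
  show "\<And>n. 2 \<le> n \<Longrightarrow> (9 / 8) ^ (n + 1) \<le> aa n" by (rule aa_low)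
qed

theorem mainTheorem10:
  shows "\<exists>L::real.
           (\<lambda>n. map_deg stack_sort (perms n) (perms n) powr (1 / real n)) \<longlonglongrightarrow> L
           \<and> 1.12462 \<le> L \<and> L \<le> 4"
proof -
  have "(\<lambda>n. map_deg stack_sort (perms n) (perms n) powr (1 / real n)) = (\<lambda>n. aa n powr (1 / real n))"
    by (rule ext) (simp add: map_deg_pc aa_def)
  then show ?thesis using seqa.final[OF seqa_aa] by simp
qed

end
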